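(* For compact sets $K_1,\ldots,K_d\subset\mathbb C$, \[ R(K_1\times\cdots\times K_d)=R(K_1)\otimes\cdots\otimes R(K_d), \] where the right-hand side denotes the closure in $C(K_1\times\cdots\times K_d)$ of the set of finite sums of finite products of functions of the form $(z_1,\ldots,z_d)\mapsto g(z_i)$ with $g\in R(K_i)$, $i=1,\ldots,d$.
   Context: For a compact set $K\subset\mathbb C^d$, $C(K)$ is the algebra of continuous complex functions on $K$ with the supremum norm, and $R(K)$ is the closure in $C(K)$ of the set of rational functions with no singular points on $K$. *)

theory Defs
  imports "HOL-Analysis.Analysis" "HOL-Computational_Algebra.Polynomial"
begin

definition sup_closure_on :: "'a::topological_space set \<Rightarrow> ('a \<Rightarrow> complex) set \<Rightarrow> ('a \<Rightarrow> complex) set" where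
  "sup_closure_on K S = {f. continuous_on K f \<and>
     (\<forall>e>0. \<exists>g\<in>S. \<forall>z\<in>K. norm (f z - g z) < e)}"

text \<open>Polynomial functions on C^d (d = CARD('n)): the ring of functions generated by
  constants and coordinate functions.\<close>
inductive_set mpoly_fun :: "(complex ^ 'n \<Rightarrow> complex) set" where
  const: "(\<lambda>z. c) \<in> mpoly_fun"
| coord: "(\<lambda>z. z $ i) \<in> mpoly_fun"
| add: "p \<in> mpoly_fun \<Longrightarrow> q \<in> mpoly_fun \<Longrightarrow> (\<lambda>z. p z + q z) \<in> mpoly_fun"
| mult: "p \<in> mpoly_fun \<Longrightarrow> q \<in> mpoly_fun \<Longrightarrow> (\<lambda>z. p z * q z) \<in> mpoly_fun"

definition rat_on :: "(complex ^ 'n) set \<Rightarrow> (complex ^ 'n \<Rightarrow> complex) set" where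
  "rat_on K = {f. \<exists>p q. p \<in> mpoly_fun \<and> q \<in> mpoly_fun \<and> (\<forall>z\<in>K. q z \<noteq> 0) \<and> f = (\<lambda>z. p z / q z)}"

definition R_multi :: "(complex ^ 'n) set \<Rightarrow> (complex ^ 'n \<Rightarrow> complex) set" where
  "R_multi K = sup_closure_on K (rat_on K)"

definition rat_on1 :: "complex set \<Rightarrow> (complex \<Rightarrow> complex) set" where
  "rat_on1 K = {f. \<exists>p q :: complex poly. (\<forall>z\<in>K. poly q z \<noteq> 0) \<and> f = (\<lambda>z. poly p z / poly q z)}"

definition R_one :: "complex set \<Rightarrow> (complex \<Rightarrow> complex) set" where
  "R_one K = sup_closure_on K (rat_on1 K)"

inductive_set tensor_gen :: "('n \<Rightarrow> complex set) \<Rightarrow> (complex ^ 'n \<Rightarrow> complex) set"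
  for K :: "'n \<Rightarrow> complex set" where
  gen: "g \<in> R_one (K i) \<Longrightarrow> (\<lambda>z. g (z $ i)) \<in> tensor_gen K"
| add: "p \<in> tensor_gen K \<Longrightarrow> q \<in> tensor_gen K \<Longrightarrow> (\<lambda>z. p z + q z) \<in> tensor_gen K"
| mult: "p \<in> tensor_gen K \<Longrightarrow> q \<in> tensor_gen K \<Longrightarrow> (\<lambda>z. p z * q z) \<in> tensor_gen K"

definition prod_set :: "('n \<Rightarrow> complex set) \<Rightarrow> (complex ^ 'n) set" where
  "prod_set K = {z. \<forall>i. z $ i \<in> K i}"

end

theory Submission
  imports Defs "HOL-Complex_Analysis.Complex_Analysis"
begin

lemma cl_in: "f \<in> S \<Longrightarrow> continuous_on K f \<Longrightarrow> f \<in> sup_closure_on K S"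
  unfolding sup_closure_on_def by force

lemma clD: "f \<in> sup_closure_on K S \<Longrightarrow> e > 0 \<Longrightarrow> \<exists>g\<in>S. \<forall>z\<in>K. norm (f z - g z) < e"
  unfolding sup_closure_on_def by blast

lemma clC: "f \<in> sup_closure_on K S \<Longrightarrow> continuous_on K f"
  unfolding sup_closure_on_def by blast

lemma cl_mono: "S \<subseteq> T \<Longrightarrow> sup_closure_on K S \<subseteq> sup_closure_on K T"
  unfolding sup_closure_on_def by blast

lemma cl_idem: "sup_closure_on K (sup_closure_on K S) \<subseteq> sup_closure_on K S"
proof
  fix f assume f: "f \<in> sup_closure_on K (sup_closure_on K S)"
  show "f \<in> sup_closure_on K S"
    unfolding sup_closure_on_def
  proof (intro CollectI conjI allI impI)
    show "continuous_on K f" using f by (rule clC)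
    fix e :: real assume e: "e > 0"
    then obtain g where g: "g \<in> sup_closure_on K S" "\<forall>z\<in>K. norm (f z - g z) < e/2"
      using clD[OF f, of "e/2"] e by auto
    then obtain h where h: "h \<in> S" "\<forall>z\<in>K. norm (g z - h z) < e/2"
      using clD[OF g(1), of "e/2"] e by auto
    have "\<forall>z\<in>K. norm (f z - h z) < e"
    proof
      fix z assume "z \<in> K"
      show "norm (f z - h z) < e" using norm_diff_triangle_less[of "f z" "g z" "e/2" "h z" "e/2"] g(2) h(2) \<open>z\<in>K\<close> by simp
    qed
    then show "\<exists>g\<in>S. \<forall>z\<in>K. norm (f z - g z) < e" using h(1) by blast
  qed
qed

lemma cl_add:
  assumes S: "\<And>a b. a \<in> S \<Longrightarrow> b \<in> S \<Longrightarrow> \<exists>c\<in>S. \<forall>z\<in>K. c z = a z + b z"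
    and f: "f \<in> sup_closure_on K S" and g: "g \<in> sup_closure_on K S"
  shows "(\<lambda>z. f z + g z) \<in> sup_closure_on K S"
  unfolding sup_closure_on_def
proof (intro CollectI conjI allI impI)
  have "continuous_on K f" "continuous_on K g" using f g by (auto intro: clC)
  then show "continuous_on K (\<lambda>z. f z + g z)" by (rule continuous_on_add)
  fix e :: real assume e: "e > 0"
  obtain a where a: "a \<in> S" "\<forall>z\<in>K. norm (f z - a z) < e/2"
    using clD[OF f, of "e/2"] e by auto
  obtain b where b: "b \<in> S" "\<forall>z\<in>K. norm (g z - b z) < e/2"
    using clD[OF g, of "e/2"] e by auto
  obtain c where c: "c \<in> S" "\<forall>z\<in>K. c z = a z + b z" using S a(1) b(1) by blast
  have "\<forall>z\<in>K. norm (f z + g z - c z) < e"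
  proof
    fix z assume z: "z \<in> K"
    have "norm (f z + g z - c z) = norm ((f z - a z) + (g z - b z))" using c(2) z
      by (simp add: algebra_simps)
    also have "\<dots> \<le> norm (f z - a z) + norm (g z - b z)" by (rule norm_triangle_ineq)
    moreover have "norm (f z - a z) < e/2" "norm (g z - b z) < e/2" using a(2) b(2) z by auto
    ultimately show "norm (f z + g z - c z) < e" by linarith
  qed
  then show "\<exists>c\<in>S. \<forall>z\<in>K. norm (f z + g z - c z) < e" using c(1) by blast
qed

lemma cl_bounded:
  assumes "compact K" "f \<in> sup_closure_on K S"
  obtains M where "M > 0" "\<forall>z\<in>K. norm (f z) \<le> M"
proof -
  have "continuous_on K f" using assms(2) by (rule clC)
  then have "compact (f ` K)" using assms(1) compact_continuous_image by blast
  then have "bounded (f ` K)" by (rule compact_imp_bounded)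
  then obtain M where "M > 0" "\<forall>x\<in>f ` K. norm x \<le> M" using bounded_pos by metis
  then show ?thesis using that by blast
qed

lemma cl_mult:
  assumes K: "compact K"
    and S: "\<And>a b. a \<in> S \<Longrightarrow> b \<in> S \<Longrightarrow> \<exists>c\<in>S. \<forall>z\<in>K. c z = a z * b z"
    and f: "f \<in> sup_closure_on K S" and g: "g \<in> sup_closure_on K S"
  shows "(\<lambda>z. f z * g z) \<in> sup_closure_on K S"
  unfolding sup_closure_on_def
proof (intro CollectI conjI allI impI)
  have "continuous_on K f" "continuous_on K g" using f g by (auto intro: clC)
  then show "continuous_on K (\<lambda>z. f z * g z)" by (rule continuous_on_mult)
  fix e :: real assume e: "e > 0"
  obtain M1 where M1: "M1 > 0" "\<forall>z\<in>K. norm (f z) \<le> M1" using cl_bounded[OF K f] by blast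
  obtain M2 where M2: "M2 > 0" "\<forall>z\<in>K. norm (g z) \<le> M2" using cl_bounded[OF K g] by blast
  define M where "M = M1 + M2"
  have M: "M > 0" "\<forall>z\<in>K. norm (f z) \<le> M" "\<forall>z\<in>K. norm (g z) \<le> M"
    using M1 M2 unfolding M_def by auto
  define \<eta> where "\<eta> = min 1 (e / (2*M+2))"
  have \<eta>1: "\<eta> > 0" "\<eta> \<le> 1" "\<eta> \<le> e/(2*M+2)"
    using e M(1) unfolding \<eta>_def by auto
  have "\<eta> * (2*M+1) \<le> e/(2*M+2) * (2*M+1)"
    using \<eta>1(3) M(1) by (intro mult_right_mono) auto
  also have "\<dots> < e" using e M(1) by (simp add: field_simps)
  finally have \<eta>: "\<eta> > 0" "\<eta> \<le> 1" "\<eta> * (2*M+1) < e" using \<eta>1 by auto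
  obtain a where a: "a \<in> S" "\<forall>z\<in>K. norm (f z - a z) < \<eta>"
    using clD[OF f \<eta>(1)] by auto
  obtain b where b: "b \<in> S" "\<forall>z\<in>K. norm (g z - b z) < \<eta>"
    using clD[OF g \<eta>(1)] by auto
  obtain c where c: "c \<in> S" "\<forall>z\<in>K. c z = a z * b z" using S a(1) b(1) by blast
  have "\<forall>z\<in>K. norm (f z * g z - c z) < e"
  proof
    fix z assume z: "z \<in> K"
    have nb: "norm (b z) \<le> M + 1"
    proof -
      have "norm (b z) \<le> norm (g z) + norm (g z - b z)"
        using norm_triangle_sub[of "b z" "g z"] norm_minus_commute[of "b z" "g z"] by linarith
      moreover have "norm (g z) \<le> M" "norm (g z - b z) < \<eta>" using M(3) b(2) z by auto
      ultimately show ?thesis using \<eta>(2) by linarith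
    qed
    have "f z * g z - c z = f z * (g z - b z) + (f z - a z) * b z"
      by (simp add: c(2)[rule_format, OF z] algebra_simps)
    then have "norm (f z * g z - c z) = norm (f z * (g z - b z) + (f z - a z) * b z)" by simp
    also have "\<dots> \<le> norm (f z * (g z - b z)) + norm ((f z - a z) * b z)"
      by (rule norm_triangle_ineq)
    also have "\<dots> = norm (f z) * norm (g z - b z) + norm (f z - a z) * norm (b z)"
      by (simp only: norm_mult)
    also have "\<dots> \<le> M * \<eta> + \<eta> * (M + 1)"
    proof (rule add_mono)
      show "norm (f z) * norm (g z - b z) \<le> M * \<eta>"
        using M(2) z b(2) M(1) by (intro mult_mono) (auto intro: less_imp_le)
      show "norm (f z - a z) * norm (b z) \<le> \<eta> * (M + 1)"
        using a(2) z nb \<eta>(1) by (intro mult_mono) (auto intro: less_imp_le)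
    qed
    also have "\<dots> = \<eta> * (2*M+1)" by (simp add: algebra_simps)
    finally show "norm (f z * g z - c z) < e" using \<eta>(3) by linarith
  qed
  then show "\<exists>c\<in>S. \<forall>z\<in>K. norm (f z * g z - c z) < e" using c(1) by blast
qed

definition upd :: "complex^'n \<Rightarrow> 'n \<Rightarrow> complex \<Rightarrow> complex^'n" where
  "upd z d w = (\<chi> j. if j = d then w else z $ j)"

lemma upd_nth: "upd z d w $ j = (if j = d then w else z $ j)"
  unfolding upd_def by simp

lemma upd_same: "upd z d (z $ d) = z"
  unfolding upd_def by (simp add: vec_eq_iff)

lemma cont_nth: "continuous_on S (\<lambda>z::'a::real_normed_vector^'n. z $ i)"
  using bounded_linear_vec_nth linear_continuous_on by blast

lemma mpoly_cont: "p \<in> mpoly_fun \<Longrightarrow> continuous_on S p"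
proof (induction rule: mpoly_fun.induct)
  case (coord i) then show ?case by (rule cont_nth)
qed (auto intro!: continuous_intros)

lemma mpoly_upd: "p \<in> mpoly_fun \<Longrightarrow> (\<lambda>z. p (upd z d w)) \<in> mpoly_fun"
proof (induction rule: mpoly_fun.induct)
  case (const c) then show ?case by (simp add: mpoly_fun.const)
next
  case (coord i)
  show ?case
  proof (cases "i = d")
    case True then show ?thesis by (simp add: upd_nth mpoly_fun.const)
  next
    case False then show ?thesis by (simp add: upd_nth mpoly_fun.coord)
  qed
next
  case (add p q) then show ?case by (simp add: mpoly_fun.add)
next
  case (mult p q) then show ?case by (simp add: mpoly_fun.mult)
qed

lemma mpoly_holo: "p \<in> mpoly_fun \<Longrightarrow> (\<lambda>w. p (upd z d w)) holomorphic_on S"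
proof (induction rule: mpoly_fun.induct)
  case (coord i)
  show ?case
  proof (cases "i = d")
    case True then show ?thesis by (simp add: upd_nth)
  next
    case False then show ?thesis by (simp add: upd_nth)
  qed
qed (auto intro!: holomorphic_intros)

lemma mpoly_poly: "(\<lambda>z. poly p (z $ i)) \<in> mpoly_fun"
proof (induction p)
  case 0 then show ?case using mpoly_fun.const[of 0] by simp
next
  case (pCons a p)
  have "(\<lambda>z. a + z $ i * poly p (z $ i)) \<in> mpoly_fun"
    by (intro mpoly_fun.add mpoly_fun.mult mpoly_fun.const mpoly_fun.coord pCons.IH)
  then show ?case by simp
qed

lemma compact_prod_set:
  assumes "\<And>i. compact (K i)"
  shows "compact (prod_set K)"
proof -
  have "closed (prod_set K)"
  proof -
    have eq: "prod_set K = (\<Inter>i. (\<lambda>z. z $ i) -` K i)" unfolding prod_set_def by auto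
    have "\<And>i. closed ((\<lambda>z::complex^'a. z $ i) -` K i)"
      using assms compact_imp_closed
      by (intro continuous_closed_vimage) (auto intro: linear_continuous_at bounded_linear_vec_nth)
    then show ?thesis unfolding eq by (intro closed_INT) auto
  qed
  moreover have "bounded (prod_set K)"
  proof -
    have "\<forall>i. \<exists>B. \<forall>x\<in>K i. norm x \<le> B"
      using assms compact_imp_bounded bounded_iff by metis
    then obtain B where B: "\<And>i x. x \<in> K i \<Longrightarrow> norm x \<le> B i" by metis
    have "norm z \<le> (\<Sum>i\<in>UNIV. B i)" if "z \<in> prod_set K" for z
    proof -
      have "norm z \<le> (\<Sum>i\<in>UNIV. norm (z $ i))"
        unfolding norm_vec_def by (rule L2_set_le_sum) auto
      also have "\<dots> \<le> (\<Sum>i\<in>UNIV. B i)"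
        using that B unfolding prod_set_def by (intro sum_mono) auto
      finally show ?thesis .
    qed
    then show ?thesis unfolding bounded_iff by blast
  qed
  ultimately show ?thesis by (simp add: compact_eq_bounded_closed)
qed

lemma prod_set_nth: "z \<in> prod_set K \<Longrightarrow> z $ i \<in> K i"
  unfolding prod_set_def by auto

lemma R_one_const: "(\<lambda>w. c) \<in> R_one K"
  unfolding R_one_def
proof (rule cl_in)
  show "(\<lambda>w. c) \<in> rat_on1 K" unfolding rat_on1_def
    by (rule CollectI, rule exI[where x="[:c:]"], rule exI[where x=1]) simp
qed (rule continuous_on_const)

lemma R_one_id: "(\<lambda>w. w) \<in> R_one K"
  unfolding R_one_def
proof (rule cl_in)
  show "(\<lambda>w. w) \<in> rat_on1 K" unfolding rat_on1_def
    by (rule CollectI, rule exI[where x="[:0,1:]"], rule exI[where x=1]) simp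
qed (rule continuous_on_id)

lemma R_one_inv:
  assumes "\<zeta> \<notin> K"
  shows "(\<lambda>w. 1 / (\<zeta> - w)) \<in> R_one K"
  unfolding R_one_def
proof (rule cl_in)
  show "(\<lambda>w. 1 / (\<zeta> - w)) \<in> rat_on1 K" unfolding rat_on1_def
    by (rule CollectI, rule exI[where x=1], rule exI[where x="[:\<zeta>, -1:]"]) (use assms in auto)
  show "continuous_on K (\<lambda>w. 1 / (\<zeta> - w))" using assms
    by (intro continuous_intros) auto
qed

context
  fixes K :: "'n::finite \<Rightarrow> complex set"
  assumes cK: "\<And>i. compact (K i)"
begin

lemma tg_const: "(\<lambda>z. c) \<in> tensor_gen K"
  by (rule tensor_gen.gen[where g="\<lambda>w. c" and i=undefined], rule R_one_const)

lemma tg_inv: "\<zeta> \<notin> K d \<Longrightarrow> (\<lambda>z. 1 / (\<zeta> - z $ d)) \<in> tensor_gen K"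
  by (rule tensor_gen.gen[where g="\<lambda>w. 1 / (\<zeta> - w)" and i=d], rule R_one_inv)

lemma mpoly_tg: "p \<in> mpoly_fun \<Longrightarrow> p \<in> tensor_gen K"
proof (induction rule: mpoly_fun.induct)
  case (const c) then show ?case by (rule tg_const)
next
  case (coord i) show ?case by (rule tensor_gen.gen[where g="\<lambda>w. w" and i=i], rule R_one_id)
qed (auto intro: tensor_gen.add tensor_gen.mult)

lemma tg_cont: "p \<in> tensor_gen K \<Longrightarrow> continuous_on (prod_set K) p"
proof (induction rule: tensor_gen.induct)
  case (gen g i)
  have "continuous_on (K i) g" using gen unfolding R_one_def by (rule clC)
  then show ?case
    by (rule continuous_on_compose2[of "K i" g _ "\<lambda>z. z $ i"]) (auto intro: cont_nth prod_set_nth)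
qed (auto intro!: continuous_intros)

abbreviation "CT \<equiv> sup_closure_on (prod_set K) (tensor_gen K)"

lemma CT_tg: "p \<in> tensor_gen K \<Longrightarrow> p \<in> CT"
  by (rule cl_in) (auto intro: tg_cont)

lemma CT_add: "f \<in> CT \<Longrightarrow> g \<in> CT \<Longrightarrow> (\<lambda>z. f z + g z) \<in> CT"
  by (rule cl_add) (auto intro: tensor_gen.add)

lemma CT_mult: "f \<in> CT \<Longrightarrow> g \<in> CT \<Longrightarrow> (\<lambda>z. f z * g z) \<in> CT"
  by (rule cl_mult) (auto intro: tensor_gen.mult compact_prod_set cK)

lemma CT_sum: "finite T \<Longrightarrow> (\<And>t. t \<in> T \<Longrightarrow> f t \<in> CT) \<Longrightarrow> (\<lambda>z. \<Sum>t\<in>T. f t z) \<in> CT"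
proof (induction T rule: finite_induct)
  case empty then show ?case using CT_tg[OF tg_const[of 0]] by simp
next
  case (insert x F)
  then show ?case by (simp add: CT_add)
qed

lemma CT_approx:
  assumes "continuous_on (prod_set K) f"
    and "\<And>e. e > 0 \<Longrightarrow> \<exists>g\<in>CT. \<forall>z\<in>prod_set K. norm (f z - g z) < e"
  shows "f \<in> CT"
proof -
  have "f \<in> sup_closure_on (prod_set K) CT"
    using assms unfolding sup_closure_on_def by blast
  then show ?thesis using cl_idem by blast
qed

lemma rat_on_add: "a \<in> rat_on S \<Longrightarrow> b \<in> rat_on S \<Longrightarrow> \<exists>c\<in>rat_on S. \<forall>z\<in>S. c z = a z + b z"
proof -
  assume "a \<in> rat_on S" "b \<in> rat_on S"
  then obtain p1 q1 p2 q2 where h: "p1 \<in> mpoly_fun" "q1 \<in> mpoly_fun" "\<forall>z\<in>S. q1 z \<noteq> 0" "a = (\<lambda>z. p1 z / q1 z)"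
    "p2 \<in> mpoly_fun" "q2 \<in> mpoly_fun" "\<forall>z\<in>S. q2 z \<noteq> 0" "b = (\<lambda>z. p2 z / q2 z)"
    unfolding rat_on_def by blast
  let ?c = "\<lambda>z. (p1 z * q2 z + p2 z * q1 z) / (q1 z * q2 z)"
  have c1: "?c \<in> rat_on S" unfolding rat_on_def
    using h by (intro CollectI exI[of _ "\<lambda>z. p1 z * q2 z + p2 z * q1 z"] exI[of _ "\<lambda>z. q1 z * q2 z"])
      (auto intro: mpoly_fun.add mpoly_fun.mult)
  have c2: "\<forall>z\<in>S. ?c z = a z + b z" using h by (simp add: field_simps)
  show ?thesis
    apply (rule bexI[where x="?c"])
    using c2 apply simp
    using c1 apply simp
    done
qed

lemma rat_on_mult: "a \<in> rat_on S \<Longrightarrow> b \<in> rat_on S \<Longrightarrow> \<exists>c\<in>rat_on S. \<forall>z\<in>S. c z = a z * b z"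
proof -
  assume "a \<in> rat_on S" "b \<in> rat_on S"
  then obtain p1 q1 p2 q2 where h: "p1 \<in> mpoly_fun" "q1 \<in> mpoly_fun" "\<forall>z\<in>S. q1 z \<noteq> 0" "a = (\<lambda>z. p1 z / q1 z)"
    "p2 \<in> mpoly_fun" "q2 \<in> mpoly_fun" "\<forall>z\<in>S. q2 z \<noteq> 0" "b = (\<lambda>z. p2 z / q2 z)"
    unfolding rat_on_def by blast
  let ?c = "\<lambda>z. (p1 z * p2 z) / (q1 z * q2 z)"
  have c1: "?c \<in> rat_on S" unfolding rat_on_def
    using h by (intro CollectI exI[of _ "\<lambda>z. p1 z * p2 z"] exI[of _ "\<lambda>z. q1 z * q2 z"])
      (auto intro: mpoly_fun.add mpoly_fun.mult)
  have c2: "\<forall>z\<in>S. ?c z = a z * b z" using h by simp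
  show ?thesis
    apply (rule bexI[where x="?c"])
    using c2 apply simp
    using c1 apply simp
    done
qed

lemma gen_R:
  assumes g: "g \<in> R_one (K i)"
  shows "(\<lambda>z. g (z $ i)) \<in> R_multi (prod_set K)"
  unfolding R_multi_def sup_closure_on_def
proof (intro CollectI conjI allI impI)
  have "continuous_on (K i) g" using g unfolding R_one_def by (rule clC)
  then show "continuous_on (prod_set K) (\<lambda>z. g (z $ i))"
    by (rule continuous_on_compose2[of "K i" g _ "\<lambda>z. z $ i"]) (auto intro: cont_nth prod_set_nth)
  fix e :: real assume e: "e > 0"
  obtain r where r: "r \<in> rat_on1 (K i)" "\<forall>w\<in>K i. norm (g w - r w) < e"
    using clD[OF g[unfolded R_one_def] e] by blast
  then obtain p q where pq: "\<forall>w\<in>K i. poly q w \<noteq> 0" "r = (\<lambda>w. poly p w / poly q w)"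
    unfolding rat_on1_def by blast
  have c1: "(\<lambda>z. poly p (z $ i) / poly q (z $ i)) \<in> rat_on (prod_set K)"
    unfolding rat_on_def
    by (rule CollectI, rule exI[where x="\<lambda>z. poly p (z $ i)"], rule exI[where x="\<lambda>z. poly q (z $ i)"])
      (use pq(1) mpoly_poly prod_set_nth[of _ K i] in auto)
  have c2: "\<forall>z\<in>prod_set K. norm (g (z $ i) - poly p (z $ i) / poly q (z $ i)) < e"
    using r(2) pq(2) prod_set_nth by auto
  show "\<exists>h\<in>rat_on (prod_set K). \<forall>z\<in>prod_set K. norm (g (z $ i) - h z) < e"
    apply (rule bexI[where x="\<lambda>z. poly p (z $ i) / poly q (z $ i)"])
    using c2 apply simp
    using c1 apply simp
    done
qed

lemma tg_R: "p \<in> tensor_gen K \<Longrightarrow> p \<in> R_multi (prod_set K)"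
proof (induction rule: tensor_gen.induct)
  case (gen g i) then show ?case by (rule gen_R)
next
  case (add p q) then show ?case unfolding R_multi_def by (intro cl_add rat_on_add)
next
  case (mult p q) then show ?case unfolding R_multi_def
    by (intro cl_mult rat_on_mult compact_prod_set cK)
qed

lemma supset: "CT \<subseteq> R_multi (prod_set K)"
proof -
  have "CT \<subseteq> sup_closure_on (prod_set K) (R_multi (prod_set K))"
    by (rule cl_mono) (auto intro: tg_R)
  also have "\<dots> \<subseteq> R_multi (prod_set K)" unfolding R_multi_def by (rule cl_idem)
  finally show ?thesis .
qed

end

lemma integral_split_N:
  fixes g :: "real \<Rightarrow> complex"
  assumes g: "continuous_on {0..1} g" and N: "N > 0"
  shows "integral {0..1} g = (\<Sum>k<N. integral {real k / N..real (Suc k) / N} g)"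
proof -
  have "m \<le> N \<Longrightarrow> integral {0..real m / N} g = (\<Sum>k<m. integral {real k / N..real (Suc k) / N} g)" for m
  proof (induction m)
    case 0 then show ?case by simp
  next
    case (Suc m)
    have le: "real m / N \<le> real (Suc m) / N" "0 \<le> real m / N" "real (Suc m) / N \<le> 1"
      using Suc.prems N by (auto simp: divide_right_mono field_simps)
    have gi: "g integrable_on {0..real (Suc m) / N}"
      by (rule integrable_continuous_interval, rule continuous_on_subset[OF g]) (use le in auto)
    have "integral {0..real m / N} g + integral {real m / N..real (Suc m) / N} g
        = integral {0..real (Suc m) / N} g"
      by (rule Henstock_Kurzweil_Integration.integral_combine[OF le(2) le(1) gi])
    then show ?case using Suc by simp
  qed
  from this[of N] N show ?thesis by simp
qed

lemma riemann:
  fixes f :: "'q::metric_space \<Rightarrow> real \<Rightarrow> complex"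
  assumes Q: "compact Q" and f: "continuous_on (Q \<times> {0..1}) (\<lambda>x. f (fst x) (snd x))"
    and \<eta>: "\<eta> > 0"
  shows "\<forall>\<^sub>F N in sequentially. \<forall>q\<in>Q.
           norm (integral {0..1} (f q) - (\<Sum>k<N. f q (real k / real N)) / of_nat N) \<le> \<eta>"
proof -
  have "uniformly_continuous_on (Q \<times> {0..1}) (\<lambda>x. f (fst x) (snd x))"
    using f Q by (intro compact_uniformly_continuous compact_Times) auto
  then obtain \<delta> where \<delta>: "\<delta> > 0" and
    ud: "\<And>x x'. x \<in> Q \<times> {0..1} \<Longrightarrow> x' \<in> Q \<times> {0..1} \<Longrightarrow> dist x' x < \<delta> \<Longrightarrow>
       dist (f (fst x') (snd x')) (f (fst x) (snd x)) < \<eta>"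
    unfolding uniformly_continuous_on_def using \<eta> by metis
  obtain N0 :: nat where N0: "N0 > 1 / \<delta>" using reals_Archimedean2 by blast
  show ?thesis unfolding eventually_sequentially
  proof (intro exI[of _ "Suc N0"] allI impI ballI)
    fix N q assume N: "Suc N0 \<le> N" and q: "q \<in> Q"
    have Npos: "N > 0" using N by simp
    have Nd: "1 / real N < \<delta>"
    proof -
      have "1 / \<delta> < real N" using N0 N by linarith
      then show ?thesis using \<delta> Npos by (simp add: field_simps)
    qed
    have cq: "continuous_on {0..1} (f q)"
    proof -
      have "continuous_on {0..1} ((\<lambda>x. f (fst x) (snd x)) \<circ> (\<lambda>t. (q, t)))"
        by (rule continuous_on_compose) (auto intro!: continuous_intros continuous_on_subset[OF f] simp: q)
      then show ?thesis by (simp add: o_def)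
    qed
    have piece: "norm (integral {real k / N..real (Suc k) / N} (f q) - f q (real k / N) / of_nat N) \<le> \<eta> / N"
      if k: "k < N" for k
    proof -
      let ?a = "real k / N" and ?b = "real (Suc k) / N"
      have ab: "?a \<le> ?b" "0 \<le> ?a" "?b \<le> 1" "?b - ?a = 1 / N"
        using k Npos by (auto simp: divide_right_mono field_simps)
      have ci: "continuous_on {?a..?b} (f q)" by (rule continuous_on_subset[OF cq]) (use ab in auto)
      have "integral {?a..?b} (\<lambda>t. f q t - f q ?a) = integral {?a..?b} (f q) - integral {?a..?b} (\<lambda>t. f q ?a)"
        by (rule integral_diff, rule integrable_continuous_interval[OF ci], rule integrable_continuous_interval, rule continuous_on_const)
      also have "integral {?a..?b} (\<lambda>t. f q ?a) = f q ?a / of_nat N"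
        using ab by (simp add: scaleR_conv_of_real field_simps)
      finally have eq: "integral {?a..?b} (f q) - f q ?a / of_nat N = integral {?a..?b} (\<lambda>t. f q t - f q ?a)" by simp
      have "norm (integral {?a..?b} (\<lambda>t. f q t - f q ?a)) \<le> \<eta> * (?b - ?a)"
      proof (rule integral_bound)
        show "?a \<le> ?b" by (rule ab)
        show "continuous_on {?a..?b} (\<lambda>t. f q t - f q ?a)" by (intro continuous_intros ci)
        fix t assume t: "t \<in> {?a..?b}"
        have "dist (q, t) (q, ?a) < \<delta>"
          using t ab Nd by (simp add: dist_Pair_Pair dist_real_def)
        moreover have ta: "?a \<le> t" "t \<le> ?b" using t by auto
        moreover have "0 \<le> t" "t \<le> 1" using ta ab(2) ab(3) by linarith+
        ultimately have "dist (f q t) (f q ?a) < \<eta>"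
          using ud[of "(q, ?a)" "(q, t)"] q ab by auto
        then show "norm (f q t - f q ?a) \<le> \<eta>" by (simp add: dist_norm)
      qed
      then show ?thesis using eq ab by simp
    qed
    have "integral {0..1} (f q) - (\<Sum>k<N. f q (real k / real N)) / of_nat N
        = (\<Sum>k<N. integral {real k / N..real (Suc k) / N} (f q) - f q (real k / N) / of_nat N)"
      by (simp add: integral_split_N[OF cq Npos] sum_subtractf sum_divide_distrib)
    also have "norm \<dots> \<le> (\<Sum>k<N. \<eta> / N)"
      by (rule order_trans[OF norm_sum], rule sum_mono, rule piece) auto
    also have "\<dots> = \<eta>" using Npos by simp
    finally show "norm (integral {0..1} (f q) - (\<Sum>k<N. f q (real k / real N)) / of_nat N) \<le> \<eta>" .
  qed
qed


definition gcn :: "real \<Rightarrow> int \<times> int \<Rightarrow> complex" where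
  "gcn h s = Complex (of_int (fst s) * h) (of_int (snd s) * h)"

definition gsq :: "real \<Rightarrow> int \<times> int \<Rightarrow> complex set" where
  "gsq h s = cbox (gcn h s) (gcn h (fst s + 1, snd s + 1))"

definition gbox :: "real \<Rightarrow> int \<times> int \<Rightarrow> complex set" where
  "gbox h s = box (gcn h s) (gcn h (fst s + 1, snd s + 1))"

definition gedges :: "int \<times> int \<Rightarrow> ((int \<times> int) \<times> (int \<times> int)) set" where
  "gedges s = {((fst s, snd s), (fst s + 1, snd s)), ((fst s + 1, snd s), (fst s + 1, snd s + 1)),
               ((fst s + 1, snd s + 1), (fst s, snd s + 1)), ((fst s, snd s + 1), (fst s, snd s))}"

definition gseg :: "real \<Rightarrow> (int \<times> int) \<times> (int \<times> int) \<Rightarrow> complex set" where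
  "gseg h e = closed_segment (gcn h (fst e)) (gcn h (snd e))"

definition grev :: "'a \<times> 'a \<Rightarrow> 'a \<times> 'a" where "grev e = (snd e, fst e)"

lemma gcn_Re [simp]: "Re (gcn h s) = of_int (fst s) * h" and gcn_Im [simp]: "Im (gcn h s) = of_int (snd s) * h"
  unfolding gcn_def by simp_all

lemma in_gsq: "z \<in> gsq h (i, j) \<longleftrightarrow> of_int i * h \<le> Re z \<and> Re z \<le> (of_int i + 1) * h \<and> of_int j * h \<le> Im z \<and> Im z \<le> (of_int j + 1) * h"
  unfolding gsq_def in_cbox_complex_iff by (auto simp: algebra_simps)

lemma in_gbox: "z \<in> gbox h (i, j) \<longleftrightarrow> of_int i * h < Re z \<and> Re z < (of_int i + 1) * h \<and> of_int j * h < Im z \<and> Im z < (of_int j + 1) * h"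
  unfolding gbox_def in_box_complex_iff by (auto simp: algebra_simps)

lemma gedges_disj: "e \<in> gedges s \<Longrightarrow> e \<in> gedges s' \<Longrightarrow> s = s'"
  unfolding gedges_def by (cases s; cases s'; auto)

lemma finite_gedges [simp]: "finite (gedges s)"
  unfolding gedges_def by simp

lemma gcn_inj: "h > 0 \<Longrightarrow> gcn h a = gcn h b \<Longrightarrow> a = b"
  unfolding gcn_def by (cases a; cases b) (auto simp: complex_eq_iff)

lemma corner_in_gsq:
  assumes "h > 0" "a \<in> {fst s, fst s + 1}" "b \<in> {snd s, snd s + 1}"
  shows "gcn h (a, b) \<in> gsq h s"
  using assms by (cases s) (auto simp: in_gsq mult_right_mono)

lemma gseg_sub_gsq:
  assumes h: "h > 0" and e: "e \<in> gedges s"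
  shows "gseg h e \<subseteq> gsq h s"
proof -
  have "gcn h (fst e) \<in> gsq h s" "gcn h (snd e) \<in> gsq h s"
    using e by (cases e; auto simp: gedges_def intro!: corner_in_gsq[OF h])+
  then show ?thesis unfolding gseg_def gsq_def by (intro closed_segment_subset convex_box)
qed

lemma gseg_rev: "gseg h (grev e) = gseg h e"
  unfolding gseg_def grev_def by (simp add: closed_segment_commute)

lemma gneighbor:
  assumes "e \<in> gedges s"
  shows "\<exists>s'. grev e \<in> gedges s'"
proof -
  obtain i j where s: "s = (i, j)" by (cases s)
  have "e = ((i,j),(i+1,j)) \<or> e = ((i+1,j),(i+1,j+1)) \<or> e = ((i+1,j+1),(i,j+1)) \<or> e = ((i,j+1),(i,j))"
    using assms unfolding s gedges_def by simp
  moreover have "grev ((i,j),(i+1,j)) \<in> gedges (i, j - 1)" by (simp add: gedges_def grev_def)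
  moreover have "grev ((i+1,j),(i+1,j+1)) \<in> gedges (i + 1, j)" by (simp add: gedges_def grev_def)
  moreover have "grev ((i+1,j+1),(i,j+1)) \<in> gedges (i, j + 1)" by (simp add: gedges_def grev_def)
  moreover have "grev ((i,j+1),(i,j)) \<in> gedges (i - 1, j)" by (simp add: gedges_def grev_def)
  ultimately show ?thesis by blast
qed

lemma gbox_gsq_disj:
  assumes h: "h > 0" and y: "y \<in> gbox h s0" and "y \<in> gsq h s"
  shows "s = s0"
proof -
  obtain i j where s: "s = (i, j)" by (cases s)
  obtain i0 j0 where s0: "s0 = (i0, j0)" by (cases s0)
  have "of_int i * h < (of_int i0 + 1) * h" "of_int i0 * h < (of_int i + 1) * h"
       "of_int j * h < (of_int j0 + 1) * h" "of_int j0 * h < (of_int j + 1) * h"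
    using assms(2,3) unfolding s s0 in_gsq in_gbox by linarith+
  then have "real_of_int i < of_int i0 + 1" "real_of_int i0 < of_int i + 1"
       "real_of_int j < of_int j0 + 1" "real_of_int j0 < of_int j + 1"
    using h by (simp_all add: mult_less_cancel_right)
  then have "i = i0" "j = j0" by linarith+
  then show ?thesis using s s0 by simp
qed

lemma rectpath_image:
  "path_image (rectpath (gcn h s) (gcn h (fst s + 1, snd s + 1))) = (\<Union>e\<in>gedges s. gseg h e)"
  unfolding rectpath_def Let_def gedges_def gseg_def
  by (simp add: path_image_join gcn_def Un_ac)

lemma rectpath_integral:
  assumes "\<And>e. e \<in> gedges s \<Longrightarrow> continuous_on (gseg h e) f" and h: "h > 0"
  shows "contour_integral (rectpath (gcn h s) (gcn h (fst s + 1, snd s + 1))) f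
       = (\<Sum>e\<in>gedges s. contour_integral (linepath (gcn h (fst e)) (gcn h (snd e))) f)"
proof -
  obtain i j where s: "s = (i, j)" by (cases s)
  let ?c = "\<lambda>a b. gcn h (a, b)"
  have c: "continuous_on (closed_segment (?c i j) (?c (i+1) j)) f"
          "continuous_on (closed_segment (?c (i+1) j) (?c (i+1) (j+1))) f"
          "continuous_on (closed_segment (?c (i+1) (j+1)) (?c i (j+1))) f"
          "continuous_on (closed_segment (?c i (j+1)) (?c i j)) f"
    using assms(1) unfolding s gedges_def gseg_def by auto
  have r: "rectpath (gcn h s) (gcn h (fst s + 1, snd s + 1)) =
     linepath (?c i j) (?c (i+1) j) +++ linepath (?c (i+1) j) (?c (i+1) (j+1)) +++
     linepath (?c (i+1) (j+1)) (?c i (j+1)) +++ linepath (?c i (j+1)) (?c i j)"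
    unfolding rectpath_def Let_def s by (simp add: gcn_def)
  have d: "?c i j \<noteq> ?c (i+1) j" "?c i j \<noteq> ?c (i+1) (j+1)" "?c i j \<noteq> ?c i (j+1)"
    "?c (i+1) j \<noteq> ?c (i+1) (j+1)" "?c (i+1) j \<noteq> ?c i (j+1)" "?c (i+1) (j+1) \<noteq> ?c i (j+1)"
    using h by (auto simp: gcn_def complex_eq_iff)
  show ?thesis unfolding r
    using c contour_integrable_continuous_linepath[OF c(1)] contour_integrable_continuous_linepath[OF c(2)]
      contour_integrable_continuous_linepath[OF c(3)] contour_integrable_continuous_linepath[OF c(4)]
    by (simp add: s gedges_def contour_integrable_joinI)
qed


lemma gcauchy:
  assumes h: "h > 0" and y: "y \<in> gbox h s0" and sV: "gsq h s \<subseteq> V" and phi: "\<phi> holomorphic_on V"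
  shows "contour_integral (rectpath (gcn h s) (gcn h (fst s + 1, snd s + 1))) (\<lambda>\<zeta>. \<phi> \<zeta> / (\<zeta> - y))
       = (if s = s0 then 2 * pi * \<i> * \<phi> y else 0)"
proof -
  let ?R = "rectpath (gcn h s) (gcn h (fst s + 1, snd s + 1))"
  have le: "Re (gcn h s) \<le> Re (gcn h (fst s + 1, snd s + 1))" "Im (gcn h s) \<le> Im (gcn h (fst s + 1, snd s + 1))"
    using h by (auto simp: algebra_simps)
  have pim: "path_image ?R = gsq h s - gbox h s"
    unfolding gsq_def gbox_def by (rule path_image_rectpath_cbox_minus_box[OF le])
  have holS: "\<phi> holomorphic_on gsq h s" using phi sV by (rule holomorphic_on_subset)
  show ?thesis
  proof (cases "s = s0")
    case True
    have yb: "y \<in> box (gcn h s) (gcn h (fst s + 1, snd s + 1))" using y True by (simp add: gbox_def)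
    have "((\<lambda>\<zeta>. \<phi> \<zeta> / (\<zeta> - y)) has_contour_integral (2*pi * \<i> * winding_number ?R y * \<phi> y)) ?R"
    proof (rule Cauchy_integral_formula_convex_simple[OF _ holS])
      show "convex (gsq h s)" unfolding gsq_def by (rule convex_box)
      show "y \<in> interior (gsq h s)" using yb by (simp add: gsq_def)
      show "path_image ?R \<subseteq> gsq h s - {y}" using pim y True by auto
    qed auto
    moreover have "winding_number ?R y = 1" by (rule winding_number_rectpath[OF yb])
    ultimately show ?thesis using True by (simp add: contour_integral_unique)
  next
    case False
    have yn: "y \<notin> gsq h s" using gbox_gsq_disj[OF h y] False by blast
    have "((\<lambda>\<zeta>. \<phi> \<zeta> / (\<zeta> - y)) has_contour_integral 0) ?R"
    proof (rule Cauchy_theorem_convex_simple)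
      show "(\<lambda>\<zeta>. \<phi> \<zeta> / (\<zeta> - y)) holomorphic_on gsq h s"
        using yn by (intro holomorphic_intros holS) auto
      show "convex (gsq h s)" unfolding gsq_def by (rule convex_box)
      show "path_image ?R \<subseteq> gsq h s" using pim by auto
    qed auto
    then show ?thesis using False by (simp add: contour_integral_unique)
  qed
qed

lemma sum_invol_zero:
  fixes I :: "'a \<Rightarrow> complex"
  assumes "finite A" "\<And>x. x \<in> A \<Longrightarrow> r x \<in> A" "\<And>x. x \<in> A \<Longrightarrow> r (r x) = x"
    "\<And>x. x \<in> A \<Longrightarrow> I (r x) = - I x"
  shows "(\<Sum>x\<in>A. I x) = 0"
proof -
  have b: "bij_betw r A A"
    by (rule bij_betwI[where g=r]) (use assms in auto)
  have "(\<Sum>x\<in>A. I (r x)) = (\<Sum>x\<in>A. I x)" by (rule sum.reindex_bij_betw[OF b])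
  moreover have "(\<Sum>x\<in>A. I (r x)) = - (\<Sum>x\<in>A. I x)"
    using assms(4) by (simp add: sum_negf)
  ultimately show ?thesis by simp
qed


lemma floor_mult_bounds:
  fixes u h :: real assumes h: "h > 0"
  shows "of_int \<lfloor>u/h\<rfloor> * h \<le> u" "u < (of_int \<lfloor>u/h\<rfloor> + 1) * h"
proof -
  have "of_int \<lfloor>u/h\<rfloor> * h \<le> u" using iffD1[OF pos_le_divide_eq[OF h]] floor_correct[of "u/h"] by blast
  moreover have "u < of_int (\<lfloor>u/h\<rfloor> + 1) * h" using iffD1[OF pos_divide_less_eq[OF h]] floor_correct[of "u/h"] by blast
  ultimately show "of_int \<lfloor>u/h\<rfloor> * h \<le> u" "u < (of_int \<lfloor>u/h\<rfloor> + 1) * h" by simp_all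
qed

lemma grid:
  assumes K: "compact K" and V: "open V" and KV: "K \<subseteq> V"
  obtains E :: "(complex \<times> complex) set" where "finite E"
    "\<And>a b. (a, b) \<in> E \<Longrightarrow> closed_segment a b \<subseteq> V"
    "\<And>a b. (a, b) \<in> E \<Longrightarrow> closed_segment a b \<inter> K = {}"
    "\<And>w. w \<in> K \<Longrightarrow> \<exists>y. y \<longlonglongrightarrow> w \<and> (\<forall>n. y n \<in> V \<and> (\<forall>(a, b)\<in>E. y n \<notin> closed_segment a b) \<and>
        (\<forall>\<phi>. \<phi> holomorphic_on V \<longrightarrow>
          (\<Sum>(a, b)\<in>E. contour_integral (linepath a b) (\<lambda>\<zeta>. \<phi> \<zeta> / (\<zeta> - y n))) = 2 * pi * \<i> * \<phi> (y n)))"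
proof -
  obtain \<delta> where \<delta>: "\<delta> > 0" "(\<Union>x\<in>K. cball x \<delta>) \<subseteq> V"
    using compact_subset_open_imp_cball_epsilon_subset[OF K V KV] by blast
  define h where "h = \<delta> / 2"
  have h: "h > 0" using \<delta> by (simp add: h_def)
  define F where "F = {s. gsq h s \<inter> K \<noteq> {}}"
  have sqV: "gsq h s \<subseteq> V" if sF: "s \<in> F" for s
  proof
    fix z assume z: "z \<in> gsq h s"
    obtain x where x: "x \<in> K" "x \<in> gsq h s" using sF unfolding F_def by blast
    obtain i j where s: "s = (i, j)" by (cases s)
    have "\<bar>Re (x - z)\<bar> \<le> h" "\<bar>Im (x - z)\<bar> \<le> h"
      using x(2) z unfolding s in_gsq by (auto simp: algebra_simps abs_le_iff)
    then have "dist x z \<le> \<delta>" using cmod_le[of "x - z"] unfolding dist_norm h_def by linarith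
    then have "z \<in> cball x \<delta>" by simp
    then show "z \<in> V" using \<delta>(2) x(1) by blast
  qed
  obtain B where B: "\<And>x. x \<in> K \<Longrightarrow> cmod x \<le> B"
    using compact_imp_bounded[OF K] unfolding bounded_iff by blast
  define M where "M = \<lceil>B / h\<rceil> + 1"
  have Fsub: "F \<subseteq> {-M..M} \<times> {-M..M}"
  proof
    fix s assume "s \<in> F"
    then obtain x where x: "x \<in> K" "x \<in> gsq h s" unfolding F_def by blast
    obtain i j where s: "s = (i, j)" by (cases s)
    have ij: "of_int i * h \<le> Re x" "Re x \<le> (of_int i + 1) * h" "of_int j * h \<le> Im x" "Im x \<le> (of_int j + 1) * h"
      using x(2) unfolding s in_gsq by auto
    have "\<bar>Re x\<bar> \<le> B" "\<bar>Im x\<bar> \<le> B" using B[OF x(1)] abs_Re_le_cmod abs_Im_le_cmod by (meson order_trans)+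
    then have "of_int i * h \<le> B" "- B \<le> (of_int i + 1) * h" "of_int j * h \<le> B" "- B \<le> (of_int j + 1) * h"
      using ij by linarith+
    then have "of_int i \<le> B / h" "- B / h - 1 \<le> of_int i" "of_int j \<le> B / h" "- B / h - 1 \<le> of_int j"
      using h by (simp_all add: field_simps)
    moreover have "B / h \<le> of_int \<lceil>B / h\<rceil>" by simp
    ultimately have "real_of_int i \<le> of_int M" "- of_int M \<le> real_of_int i"
       "real_of_int j \<le> of_int M" "- of_int M \<le> real_of_int j"
      unfolding M_def by (simp_all, linarith+)
    then have "i \<le> M" "- M \<le> i" "j \<le> M" "- M \<le> j" by (metis of_int_le_iff of_int_minus)+
    then have "i \<in> {-M..M}" "j \<in> {-M..M}" by simp_all
    then show "s \<in> {-M..M} \<times> {-M..M}" using s by simp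
  qed
  have finF: "finite F" by (rule finite_subset[OF Fsub]) simp
  define D where "D = (\<Union>s\<in>F. gedges s)"
  have finD: "finite D" unfolding D_def using finF by simp
  define Dout where "Dout = {e \<in> D. grev e \<notin> D}"
  define Din where "Din = {e \<in> D. grev e \<in> D}"
  define cc where "cc = (\<lambda>e. (gcn h (fst e), gcn h (snd e)))"
  define E where "E = cc ` Dout"
  have finDout: "finite Dout" using finD unfolding Dout_def by simp
  have injcc: "inj_on cc Dout"
  proof (rule inj_onI)
    fix e1 e2 assume "cc e1 = cc e2"
    then have "gcn h (fst e1) = gcn h (fst e2)" "gcn h (snd e1) = gcn h (snd e2)" unfolding cc_def by simp_all
    then have "fst e1 = fst e2" "snd e1 = snd e2" using gcn_inj[OF h] by blast+
    then show "e1 = e2" by (rule prod_eqI)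
  qed
  have segE: "closed_segment a b = gseg h e" if "(a, b) = cc e" for a b e
    using that unfolding cc_def gseg_def by simp
  have segV: "gseg h e \<subseteq> V" if eD: "e \<in> D" for e
  proof -
    obtain s where s: "s \<in> F" "e \<in> gedges s" using eD unfolding D_def by blast
    show ?thesis using gseg_sub_gsq[OF h s(2)] sqV[OF s(1)] by blast
  qed
  have segK: "gseg h e \<inter> K = {}" if eD: "e \<in> Dout" for e
  proof (rule ccontr)
    assume "gseg h e \<inter> K \<noteq> {}"
    then obtain x where x: "x \<in> gseg h e" "x \<in> K" by blast
    obtain s where s: "s \<in> F" "e \<in> gedges s" using eD unfolding Dout_def D_def by blast
    obtain s' where s': "grev e \<in> gedges s'" using gneighbor[OF s(2)] by blast
    have "x \<in> gsq h s'" using gseg_sub_gsq[OF h s'] x(1) gseg_rev[of h e] by blast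
    then have "s' \<in> F" using x(2) unfolding F_def by blast
    then have "grev e \<in> D" using s' unfolding D_def by blast
    then show False using eD unfolding Dout_def by blast
  qed
  have key: "(\<Sum>e\<in>Dout. contour_integral (linepath (gcn h (fst e)) (gcn h (snd e))) (\<lambda>\<zeta>. \<phi> \<zeta> / (\<zeta> - y)))
      = 2 * pi * \<i> * \<phi> y"
    if y: "y \<in> gbox h s0" and s0: "s0 \<in> F" and phi: "\<phi> holomorphic_on V" for y s0 \<phi>
  proof -
    define I where "I = (\<lambda>e. contour_integral (linepath (gcn h (fst e)) (gcn h (snd e))) (\<lambda>\<zeta>. \<phi> \<zeta> / (\<zeta> - y)))"
    have ynot: "y \<notin> gseg h e" if "e \<in> gedges s" "s \<in> F" for e s
    proof (cases "s = s0")
      case True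
      have le: "Re (gcn h s) \<le> Re (gcn h (fst s + 1, snd s + 1))" "Im (gcn h s) \<le> Im (gcn h (fst s + 1, snd s + 1))"
        using h by (auto simp: algebra_simps)
      have "gseg h e \<subseteq> gsq h s - gbox h s"
        using rectpath_image[of h s] path_image_rectpath_cbox_minus_box[OF le] that(1)
        unfolding gsq_def gbox_def by blast
      then show ?thesis using y True by blast
    next
      case False
      then have "y \<notin> gsq h s" using gbox_gsq_disj[OF h y] by blast
      then show ?thesis using gseg_sub_gsq[OF h that(1)] by blast
    qed
    have contV: "continuous_on V \<phi>" using phi by (rule holomorphic_on_imp_continuous_on)
    have cont: "continuous_on (gseg h e) (\<lambda>\<zeta>. \<phi> \<zeta> / (\<zeta> - y))" if "e \<in> gedges s" "s \<in> F" for e s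
    proof -
      have "e \<in> D" using that unfolding D_def by blast
      then have "continuous_on (gseg h e) \<phi>" using continuous_on_subset[OF contV segV] by blast
      then show ?thesis using ynot[OF that] by (intro continuous_intros) auto
    qed
    have "(\<Sum>s\<in>F. contour_integral (rectpath (gcn h s) (gcn h (fst s + 1, snd s + 1))) (\<lambda>\<zeta>. \<phi> \<zeta> / (\<zeta> - y)))
        = (\<Sum>s\<in>F. (if s = s0 then 2 * pi * \<i> * \<phi> y else 0))"
      by (rule sum.cong[OF refl], rule gcauchy[OF h y sqV phi]) simp
    also have "\<dots> = 2 * pi * \<i> * \<phi> y" using finF s0 by simp
    finally have 1: "(\<Sum>s\<in>F. contour_integral (rectpath (gcn h s) (gcn h (fst s + 1, snd s + 1))) (\<lambda>\<zeta>. \<phi> \<zeta> / (\<zeta> - y)))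
        = 2 * pi * \<i> * \<phi> y" .
    have "(\<Sum>s\<in>F. contour_integral (rectpath (gcn h s) (gcn h (fst s + 1, snd s + 1))) (\<lambda>\<zeta>. \<phi> \<zeta> / (\<zeta> - y)))
        = (\<Sum>s\<in>F. \<Sum>e\<in>gedges s. I e)"
      unfolding I_def by (rule sum.cong[OF refl], rule rectpath_integral[OF cont h]) auto
    also have "\<dots> = (\<Sum>e\<in>D. I e)"
      unfolding D_def by (rule sum.UNION_disjoint[symmetric]) (use finF gedges_disj in auto)
    also have "\<dots> = (\<Sum>e\<in>Dout. I e) + (\<Sum>e\<in>Din. I e)"
    proof -
      have "D = Dout \<union> Din" "Dout \<inter> Din = {}" unfolding Dout_def Din_def by auto
      moreover have "finite Din" using finD unfolding Din_def by simp
      ultimately show ?thesis using finDout by (simp add: sum.union_disjoint)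
    qed
    also have "(\<Sum>e\<in>Din. I e) = 0"
    proof (rule sum_invol_zero[where r=grev])
      show "finite Din" using finD unfolding Din_def by simp
      show "grev x \<in> Din" if "x \<in> Din" for x using that unfolding Din_def grev_def by simp
      show "grev (grev x) = x" for x :: "(int \<times> int) \<times> (int \<times> int)" unfolding grev_def by simp
      show "I (grev x) = - I x" if xD: "x \<in> Din" for x
      proof -
        obtain s where s: "s \<in> F" "x \<in> gedges s" using xD unfolding Din_def D_def by blast
        show ?thesis unfolding I_def grev_def
          using contour_integral_reverse_linepath[OF cont[OF s(2,1), unfolded gseg_def]] by simp
      qed
    qed
    finally show ?thesis using 1 unfolding I_def by simp
  qed
  show ?thesis
  proof (rule that)
    show "finite E" unfolding E_def using finDout by simp
    show "closed_segment a b \<subseteq> V" if ab: "(a, b) \<in> E" for a b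
    proof -
      obtain e where e: "e \<in> Dout" "(a, b) = cc e" using ab unfolding E_def by auto
      have "e \<in> D" using e(1) unfolding Dout_def by simp
      then show ?thesis using segE[OF e(2)] segV by simp
    qed
    show "closed_segment a b \<inter> K = {}" if ab: "(a, b) \<in> E" for a b
    proof -
      obtain e where e: "e \<in> Dout" "(a, b) = cc e" using ab unfolding E_def by auto
      then show ?thesis using segE[OF e(2)] segK by simp
    qed
    fix w assume w: "w \<in> K"
    define s0 where "s0 = (\<lfloor>Re w / h\<rfloor>, \<lfloor>Im w / h\<rfloor>)"
    define t0 where "t0 = min ((of_int \<lfloor>Re w / h\<rfloor> + 1) * h - Re w) ((of_int \<lfloor>Im w / h\<rfloor> + 1) * h - Im w)"
    have fl: "of_int \<lfloor>Re w / h\<rfloor> * h \<le> Re w" "Re w < (of_int \<lfloor>Re w / h\<rfloor> + 1) * h"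
             "of_int \<lfloor>Im w / h\<rfloor> * h \<le> Im w" "Im w < (of_int \<lfloor>Im w / h\<rfloor> + 1) * h"
      using floor_mult_bounds[OF h, of "Re w"] floor_mult_bounds[OF h, of "Im w"] by auto
    have t0: "t0 > 0" unfolding t0_def using fl by simp
    have s0F: "s0 \<in> F"
    proof -
      have "w \<in> gsq h s0" unfolding s0_def in_gsq using fl by simp
      then show ?thesis unfolding F_def using w by blast
    qed
    define y where "y = (\<lambda>n::nat. w + of_real (t0 / real (Suc (Suc n))) * (1 + \<i>))"
    have ybox: "y n \<in> gbox h s0" for n
    proof -
      define \<tau> where "\<tau> = t0 / real (Suc (Suc n))"
      have r: "real (Suc (Suc n)) \<ge> 2" by simp
      have "t0 / real (Suc (Suc n)) \<le> t0 / 2" using t0 r by (intro divide_left_mono) auto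
      then have \<tau>1: "\<tau> < t0" using t0 unfolding \<tau>_def by linarith
      have \<tau>0: "0 < \<tau>" unfolding \<tau>_def using t0 by (intro divide_pos_pos) auto
      have tm: "t0 \<le> (of_int \<lfloor>Re w / h\<rfloor> + 1) * h - Re w" "t0 \<le> (of_int \<lfloor>Im w / h\<rfloor> + 1) * h - Im w"
        unfolding t0_def by simp_all
      have ry: "Re (y n) = Re w + \<tau>" "Im (y n) = Im w + \<tau>" unfolding y_def \<tau>_def by simp_all
      show ?thesis unfolding s0_def in_gbox ry using fl \<tau>0 \<tau>1 tm by (intro conjI; linarith)
    qed
    have ylim: "y \<longlonglongrightarrow> w"
    proof -
      have "(\<lambda>n. t0 / real n) \<longlonglongrightarrow> 0" by (rule lim_const_over_n)
      then have "(\<lambda>n. t0 / real (Suc (Suc n))) \<longlonglongrightarrow> 0" by (intro LIMSEQ_Suc)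
      then have "(\<lambda>n. w + of_real (t0 / real (Suc (Suc n))) * (1 + \<i>)) \<longlonglongrightarrow> w + of_real 0 * (1 + \<i>)"
        by (intro tendsto_intros)
      then show ?thesis unfolding y_def by simp
    qed
    show "\<exists>y. y \<longlonglongrightarrow> w \<and> (\<forall>n. y n \<in> V \<and> (\<forall>(a, b)\<in>E. y n \<notin> closed_segment a b) \<and>
        (\<forall>\<phi>. \<phi> holomorphic_on V \<longrightarrow>
          (\<Sum>(a, b)\<in>E. contour_integral (linepath a b) (\<lambda>\<zeta>. \<phi> \<zeta> / (\<zeta> - y n))) = 2 * pi * \<i> * \<phi> (y n)))"
    proof (intro exI[of _ y] conjI allI impI ylim)
      fix n
      show "y n \<in> V" using ybox[of n] sqV[OF s0F] unfolding gbox_def gsq_def using box_subset_cbox by blast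
      show "\<forall>(a, b)\<in>E. y n \<notin> closed_segment a b"
      proof (clarify)
        fix a b assume ab: "(a, b) \<in> E" "y n \<in> closed_segment a b"
        then obtain e where e: "e \<in> Dout" "(a, b) = cc e" unfolding E_def by auto
        obtain s where s: "s \<in> F" "e \<in> gedges s" using e(1) unfolding Dout_def D_def by blast
        have "y n \<in> gseg h e" using ab(2) segE[OF e(2)] by simp
        moreover have "y n \<in> gsq h s" using calculation gseg_sub_gsq[OF h s(2)] by blast
        then have "s = s0" using gbox_gsq_disj[OF h ybox] by blast
        ultimately show False
        proof -
          have le: "Re (gcn h s) \<le> Re (gcn h (fst s + 1, snd s + 1))" "Im (gcn h s) \<le> Im (gcn h (fst s + 1, snd s + 1))"
            using h by (auto simp: algebra_simps)
          have "gseg h e \<subseteq> gsq h s - gbox h s"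
            using rectpath_image[of h s] path_image_rectpath_cbox_minus_box[OF le] s(2)
            unfolding gsq_def gbox_def by blast
          then show False using \<open>y n \<in> gseg h e\<close> ybox[of n] \<open>s = s0\<close> by blast
        qed
      qed
      fix \<phi> :: "complex \<Rightarrow> complex" assume phi: "\<phi> holomorphic_on V"
      have "(\<Sum>(a, b)\<in>E. contour_integral (linepath a b) (\<lambda>\<zeta>. \<phi> \<zeta> / (\<zeta> - y n)))
          = (\<Sum>e\<in>Dout. contour_integral (linepath (gcn h (fst e)) (gcn h (snd e))) (\<lambda>\<zeta>. \<phi> \<zeta> / (\<zeta> - y n)))"
        unfolding E_def by (subst sum.reindex[OF injcc]) (simp add: cc_def)
      also have "\<dots> = 2 * pi * \<i> * \<phi> (y n)" by (rule key[OF ybox s0F phi])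
      finally show "(\<Sum>(a, b)\<in>E. contour_integral (linepath a b) (\<lambda>\<zeta>. \<phi> \<zeta> / (\<zeta> - y n))) = 2 * pi * \<i> * \<phi> (y n)" .
    qed
  qed
qed


lemma core1:
  fixes G :: "'p::metric_space \<Rightarrow> complex \<Rightarrow> complex"
  assumes K: "compact K" and V: "open V" and KV: "K \<subseteq> V" and P: "compact P"
    and Gc: "continuous_on (P \<times> V) (\<lambda>x. G (fst x) (snd x))"
    and Gh: "\<And>p. p \<in> P \<Longrightarrow> G p holomorphic_on V"
    and \<epsilon>: "\<epsilon> > 0"
  shows "\<exists>T :: ((complex \<times> complex) \<times> nat) set. \<exists>cs \<zeta>s. finite T \<and> (\<forall>t\<in>T. \<zeta>s t \<in> V \<and> \<zeta>s t \<notin> K) \<and>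
     (\<forall>p\<in>P. \<forall>w\<in>K. norm (G p w - (\<Sum>t\<in>T. cs t * G p (\<zeta>s t) / (\<zeta>s t - w))) \<le> \<epsilon>)"
proof -
  obtain E :: "(complex \<times> complex) set" where E: "finite E"
    "\<And>a b. (a, b) \<in> E \<Longrightarrow> closed_segment a b \<subseteq> V"
    "\<And>a b. (a, b) \<in> E \<Longrightarrow> closed_segment a b \<inter> K = {}"
    "\<And>w. w \<in> K \<Longrightarrow> \<exists>y. y \<longlonglongrightarrow> w \<and> (\<forall>n. y n \<in> V \<and> (\<forall>(a, b)\<in>E. y n \<notin> closed_segment a b) \<and>
        (\<forall>\<phi>. \<phi> holomorphic_on V \<longrightarrow>
          (\<Sum>(a, b)\<in>E. contour_integral (linepath a b) (\<lambda>\<zeta>. \<phi> \<zeta> / (\<zeta> - y n))) = 2 * pi * \<i> * \<phi> (y n)))"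
    using grid[OF K V KV] by blast
  define S where "S = (\<Union>e\<in>E. closed_segment (fst e) (snd e))"
  have Sc: "compact S" unfolding S_def using E(1) by (intro compact_UN) auto
  have SK: "K \<inter> S = {}" unfolding S_def using E(3) by fastforce
  obtain d where d: "d > 0" "\<And>x \<zeta>. x \<in> K \<Longrightarrow> \<zeta> \<in> S \<Longrightarrow> d \<le> dist x \<zeta>"
    using separate_compact_closed[OF K compact_imp_closed[OF Sc] SK] by blast
  define C where "C = {x + u | x u. x \<in> K \<and> u \<in> cball 0 (d/2)}"
  have Cc: "compact C" unfolding C_def by (intro compact_sums K compact_cball)
  have CS: "\<zeta> \<noteq> y" if yC: "y \<in> C" and zS: "\<zeta> \<in> S" for y \<zeta>
  proof
    assume eq: "\<zeta> = y"
    obtain x u where xu: "y = x + u" "x \<in> K" "norm u \<le> d/2" using yC unfolding C_def by auto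
    have "d \<le> dist x \<zeta>" using d(2)[OF xu(2) zS] .
    also have "dist x \<zeta> = norm u" using eq xu(1) by (simp add: dist_norm norm_minus_commute)
    finally show False using xu(3) d(1) by linarith
  qed
  have segS: "closed_segment a b \<subseteq> S" if "(a, b) \<in> E" for a b
    unfolding S_def using that by force
  define \<eta> where "\<eta> = 2 * pi * \<epsilon> / (real (card E) + 1)"
  have \<eta>: "\<eta> > 0" unfolding \<eta>_def using \<epsilon> by simp
  define f where "f = (\<lambda>e::complex \<times> complex. \<lambda>x::'p \<times> complex. \<lambda>t::real.
      G (fst x) (linepath (fst e) (snd e) t) / (linepath (fst e) (snd e) t - snd x) * (snd e - fst e))"
  have fcont: "continuous_on ((P \<times> C) \<times> {0..1}) (\<lambda>x. f e (fst x) (snd x))" if e: "e \<in> E" for e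
  proof -
    have lin: "continuous_on ((P \<times> C) \<times> {0..1}) (\<lambda>x. linepath (fst e) (snd e) (snd x))"
      unfolding linepath_def by (intro continuous_intros)
    have linS: "linepath (fst e) (snd e) (snd x) \<in> closed_segment (fst e) (snd e)" if "x \<in> (P \<times> C) \<times> {0..1}" for x
      using that by (intro linepath_in_path) auto
    have "continuous_on ((P \<times> C) \<times> {0..1}) (\<lambda>x. G (fst (fst x)) (linepath (fst e) (snd e) (snd x)))"
    proof (rule continuous_on_compose2[OF Gc, where f="\<lambda>x. (fst (fst x), linepath (fst e) (snd e) (snd x))", simplified])
      show "continuous_on ((P \<times> C) \<times> {0..1}) (\<lambda>x. (fst (fst x), linepath (fst e) (snd e) (snd x)))"
        using lin by (intro continuous_intros) auto
      show "(\<lambda>x. (fst (fst x), linepath (fst e) (snd e) (snd x))) ` ((P \<times> C) \<times> {0..1}) \<subseteq> P \<times> V"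
        using linS E(2)[of "fst e" "snd e"] e by fastforce
    qed
    moreover have "linepath (fst e) (snd e) (snd x) - snd (fst x) \<noteq> 0" if "x \<in> (P \<times> C) \<times> {0..1}" for x
      using CS[of "snd (fst x)" "linepath (fst e) (snd e) (snd x)"] linS[OF that] segS[of "fst e" "snd e"] e that by auto
    ultimately show ?thesis unfolding f_def
      by (intro continuous_intros lin) auto
  qed
  have ev: "\<forall>\<^sub>F N in sequentially. \<forall>e\<in>E. \<forall>q\<in>P \<times> C.
           norm (integral {0..1} (f e q) - (\<Sum>k<N. f e q (real k / real N)) / of_nat N) \<le> \<eta>"
    using E(1) fcont by (intro eventually_ball_finite ballI riemann[OF compact_Times[OF P Cc] _ \<eta>]) auto
  then obtain N where N: "N \<ge> 1" "\<And>e q. e \<in> E \<Longrightarrow> q \<in> P \<times> C \<Longrightarrow>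
           norm (integral {0..1} (f e q) - (\<Sum>k<N. f e q (real k / real N)) / of_nat N) \<le> \<eta>"
    unfolding eventually_sequentially by (metis le_cases nle_le order.refl)
  define T where "T = E \<times> {..<N}"
  define \<zeta>s where "\<zeta>s = (\<lambda>t::(complex \<times> complex) \<times> nat. linepath (fst (fst t)) (snd (fst t)) (real (snd t) / real N))"
  define cs where "cs = (\<lambda>t::(complex \<times> complex) \<times> nat. (snd (fst t) - fst (fst t)) / (of_nat N * (2 * pi * \<i>)))"
  have \<zeta>seg: "\<zeta>s t \<in> closed_segment (fst (fst t)) (snd (fst t))" if "t \<in> T" for t
  proof -
    have "real (snd t) / real N \<in> {0..1}" using that N(1) unfolding T_def by auto
    then show ?thesis unfolding \<zeta>s_def by (rule linepath_in_path)
  qed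
  have \<zeta>V: "\<zeta>s t \<in> V" "\<zeta>s t \<notin> K" if "t \<in> T" for t
    using \<zeta>seg[OF that] E(2)[of "fst (fst t)" "snd (fst t)"] E(3)[of "fst (fst t)" "snd (fst t)"] that
    unfolding T_def by auto
  define A where "A = (\<lambda>p y. \<Sum>t\<in>T. cs t * G p (\<zeta>s t) / (\<zeta>s t - y))"
  have Aeq: "A p y = (\<Sum>e\<in>E. (\<Sum>k<N. f e (p, y) (real k / real N)) / of_nat N) / (2 * pi * \<i>)" for p y
  proof -
    have "A p y = (\<Sum>e\<in>E. \<Sum>k<N. cs (e, k) * G p (\<zeta>s (e, k)) / (\<zeta>s (e, k) - y))"
      unfolding A_def T_def sum.cartesian_product by (simp add: case_prod_unfold)
    also have "\<dots> = (\<Sum>e\<in>E. \<Sum>k<N. f e (p, y) (real k / real N) / (of_nat N * (2 * pi * \<i>)))"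
      unfolding cs_def \<zeta>s_def f_def by (intro sum.cong refl) (simp add: field_simps)
    also have "\<dots> = (\<Sum>e\<in>E. (\<Sum>k<N. f e (p, y) (real k / real N)) / of_nat N) / (2 * pi * \<i>)"
      by (simp add: sum_divide_distrib)
    finally show ?thesis .
  qed
  have bound: "norm (G p y - A p y) \<le> \<epsilon>"
    if p: "p \<in> P" and y: "y \<in> C" and yV: "y \<in> V"
       and yE: "\<forall>(a, b)\<in>E. y \<notin> closed_segment a b"
       and yI: "(\<Sum>(a, b)\<in>E. contour_integral (linepath a b) (\<lambda>\<zeta>. G p \<zeta> / (\<zeta> - y))) = 2 * pi * \<i> * G p y"
    for p y
  proof -
    have ci: "contour_integral (linepath (fst e) (snd e)) (\<lambda>\<zeta>. G p \<zeta> / (\<zeta> - y)) = integral {0..1} (f e (p, y))"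
      if e: "e \<in> E" for e
    proof -
      have "continuous_on (closed_segment (fst e) (snd e)) (G p)"
        using holomorphic_on_imp_continuous_on[OF Gh[OF p]] E(2)[of "fst e" "snd e"] e continuous_on_subset by fastforce
      moreover have "\<zeta> - y \<noteq> 0" if "\<zeta> \<in> closed_segment (fst e) (snd e)" for \<zeta>
        using yE e that by fastforce
      ultimately have "continuous_on (closed_segment (fst e) (snd e)) (\<lambda>\<zeta>. G p \<zeta> / (\<zeta> - y))"
        by (intro continuous_intros) auto
      then have "((\<lambda>\<zeta>. G p \<zeta> / (\<zeta> - y)) has_contour_integral contour_integral (linepath (fst e) (snd e)) (\<lambda>\<zeta>. G p \<zeta> / (\<zeta> - y)))
          (linepath (fst e) (snd e))"
        by (intro has_contour_integral_integral contour_integrable_continuous_linepath)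
      then have "((\<lambda>t. G p (linepath (fst e) (snd e) t) / (linepath (fst e) (snd e) t - y) * (snd e - fst e))
          has_integral contour_integral (linepath (fst e) (snd e)) (\<lambda>\<zeta>. G p \<zeta> / (\<zeta> - y))) {0..1}"
        by (simp add: has_contour_integral_linepath)
      then show ?thesis unfolding f_def by (simp add: integral_unique)
    qed
    have "2 * pi * \<i> * G p y = (\<Sum>e\<in>E. integral {0..1} (f e (p, y)))"
      unfolding yI[symmetric] by (rule sum.cong[OF refl]) (auto simp: ci[symmetric])
    then have eq2: "2 * pi * \<i> * (G p y - A p y) = (\<Sum>e\<in>E. integral {0..1} (f e (p, y)) - (\<Sum>k<N. f e (p, y) (real k / real N)) / of_nat N)"
      unfolding Aeq by (simp add: right_diff_distrib sum_subtractf)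
    have "norm (\<Sum>e\<in>E. integral {0..1} (f e (p, y)) - (\<Sum>k<N. f e (p, y) (real k / real N)) / of_nat N)
        \<le> (\<Sum>e\<in>E. norm (integral {0..1} (f e (p, y)) - (\<Sum>k<N. f e (p, y) (real k / real N)) / of_nat N))"
      by (rule norm_sum)
    also have "\<dots> \<le> (\<Sum>e\<in>E. \<eta>)"
    proof (rule sum_mono)
      fix e assume "e \<in> E"
      moreover have "(p, y) \<in> P \<times> C" using p y by simp
      ultimately show "norm (integral {0..1} (f e (p, y)) - (\<Sum>k<N. f e (p, y) (real k / real N)) / of_nat N) \<le> \<eta>"
        by (rule N(2))
    qed
    also have "\<dots> = real (card E) * \<eta>" by simp
    finally have "norm (2 * pi * \<i> * (G p y - A p y)) \<le> real (card E) * \<eta>" unfolding eq2 .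
    then have "2 * pi * norm (G p y - A p y) \<le> real (card E) * \<eta>"
      by (simp add: norm_mult)
    also have "\<dots> \<le> 2 * pi * \<epsilon>"
    proof -
      have "real (card E) * \<eta> = 2 * pi * \<epsilon> * (real (card E) / (real (card E) + 1))"
        unfolding \<eta>_def by (simp add: field_simps)
      also have "\<dots> \<le> 2 * pi * \<epsilon> * 1"
        using \<epsilon> by (intro mult_left_mono) auto
      finally show ?thesis by simp
    qed
    finally show ?thesis by simp
  qed
  show ?thesis
  proof (intro exI conjI ballI)
    show "finite T" unfolding T_def using E(1) by simp
    fix t assume "t \<in> T"
    then show "\<zeta>s t \<in> V" "\<zeta>s t \<notin> K" using \<zeta>V by auto
  next
    fix p w assume p: "p \<in> P" and w: "w \<in> K"
    obtain y where y: "y \<longlonglongrightarrow> w" "\<And>n. y n \<in> V" "\<And>n. \<forall>(a, b)\<in>E. y n \<notin> closed_segment a b"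
      "\<And>n \<phi>. \<phi> holomorphic_on V \<Longrightarrow>
          (\<Sum>(a, b)\<in>E. contour_integral (linepath a b) (\<lambda>\<zeta>. \<phi> \<zeta> / (\<zeta> - y n))) = 2 * pi * \<i> * \<phi> (y n)"
      using E(4)[OF w] by blast
    have evC: "\<forall>\<^sub>F n in sequentially. y n \<in> C"
    proof -
      have "\<forall>\<^sub>F n in sequentially. dist (y n) w < d/2" using y(1) d(1) by (intro tendstoD) auto
      then show ?thesis
      proof (rule eventually_mono)
        fix n assume "dist (y n) w < d/2"
        then have "y n = w + (y n - w)" "y n - w \<in> cball 0 (d/2)" by (auto simp: dist_norm norm_minus_commute)
        then show "y n \<in> C" unfolding C_def using w by blast
      qed
    qed
    define D where "D = (\<lambda>z. G p z - A p z)"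
    have "isCont D w"
    proof -
      have "isCont (G p) w"
        using holomorphic_on_imp_continuous_on[OF Gh[OF p]] V KV w continuous_on_eq_continuous_at by blast
      moreover have ct: "isCont (\<lambda>z. cs t * G p (\<zeta>s t) / (\<zeta>s t - z)) w" if "t \<in> T" for t
        using \<zeta>V[OF that] w by (intro continuous_intros) auto
      have "isCont (\<lambda>z. \<Sum>t\<in>T. cs t * G p (\<zeta>s t) / (\<zeta>s t - z)) w"
        by (rule continuous_sum) (rule ct)
      ultimately show ?thesis unfolding D_def A_def by (rule continuous_diff)
    qed
    then have "(\<lambda>n. D (y n)) \<longlonglongrightarrow> D w" using y(1) by (rule isCont_tendsto_compose)
    moreover have "\<forall>\<^sub>F n in sequentially. norm (D (y n)) \<le> \<epsilon>"
      using evC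
    proof (rule eventually_mono)
      fix n assume "y n \<in> C"
      then show "norm (D (y n)) \<le> \<epsilon>" unfolding D_def
        by (rule bound[OF p _ y(2) y(3) y(4)[OF Gh[OF p]]])
    qed
    ultimately have "norm (D w) \<le> \<epsilon>" by (intro Lim_norm_ubound[of sequentially]) auto
    then show "norm (G p w - (\<Sum>t\<in>T. cs t * G p (\<zeta>s t) / (\<zeta>s t - w))) \<le> \<epsilon>"
      unfolding D_def A_def .
  qed
qed


lemma cont_upd: "continuous_on S (\<lambda>x::(complex^'n) \<times> complex. upd (fst x) d (snd x))"
  unfolding upd_def
proof (rule continuous_on_vec_lambda)
  fix j
  show "continuous_on S (\<lambda>x. if j = d then snd x else fst x $ j)"
  proof (cases "j = d")
    case True then show ?thesis by (simp add: continuous_on_snd continuous_on_id)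
  next
    case False
    have "continuous_on S (\<lambda>x::(complex^'n) \<times> complex. fst x $ j)"
      by (rule continuous_on_compose2[OF cont_nth[of UNIV j]]) (auto intro: continuous_intros)
    then show ?thesis using False by simp
  qed
qed

definition dep :: "'n set \<Rightarrow> (complex^'n \<Rightarrow> complex) \<Rightarrow> bool" where
  "dep J q \<longleftrightarrow> (\<forall>z w. (\<forall>j\<in>J. z $ j = w $ j) \<longrightarrow> q z = q w)"

context
  fixes K :: "'n::finite \<Rightarrow> complex set"
  assumes cK: "\<And>i. compact (K i)"
begin

lemma inv_CT:
  assumes q: "q \<in> mpoly_fun" and nz: "\<forall>z\<in>prod_set K. q z \<noteq> 0"
  shows "(\<lambda>z. 1 / q z) \<in> CT K"
proof (cases "prod_set K = {}")
  case True
  show ?thesis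
  proof (rule CT_approx[OF cK])
    show "continuous_on (prod_set K) (\<lambda>z. 1 / q z)" using True by simp
    fix e :: real assume "e > 0"
    show "\<exists>g\<in>CT K. \<forall>z\<in>prod_set K. norm (1 / q z - g z) < e"
      using True CT_tg[where K=K, OF cK tg_const[where K=K, OF cK]] by blast
  qed
next
  case False
  define Kp where "Kp = prod_set K"
  have Kpc: "compact Kp" unfolding Kp_def by (rule compact_prod_set[OF cK])
  have qcont: "continuous_on S q" for S using q by (rule mpoly_cont)
  have Kne: "K i \<noteq> {}" for i using False unfolding prod_set_def by auto
  define Oq where "Oq = q -` (- {0})"
  have Oo: "open Oq" unfolding Oq_def
    using qcont[of UNIV] by (intro continuous_open_vimage) (auto simp: continuous_on_eq_continuous_at)
  have KpO: "Kp \<subseteq> Oq" using nz unfolding Kp_def Oq_def by auto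
  obtain \<delta> where \<delta>: "\<delta> > 0" "(\<Union>x\<in>Kp. ball x \<delta>) \<subseteq> Oq"
    using compact_subset_open_imp_ball_epsilon_subset[OF Kpc Oo KpO] by blast
  define r where "r = \<delta> / real CARD('n)"
  have r: "r > 0" unfolding r_def using \<delta> by simp
  define V where "V = (\<lambda>i. \<Union>k\<in>K i. ball k r)"
  have Vo: "open (V i)" for i unfolding V_def by auto
  have KV: "K i \<subseteq> V i" for i unfolding V_def using r by force
  define U where "U = {z. \<forall>i. z $ i \<in> V i}"
  have KpU: "Kp \<subseteq> U" unfolding Kp_def U_def prod_set_def using KV by blast
  have Unz: "q z \<noteq> 0" if z: "z \<in> U" for z
  proof -
    have ex: "\<forall>i. \<exists>k. k \<in> K i \<and> dist k (z $ i) < r" using z unfolding U_def V_def by auto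
    define k where "k = (\<chi> i. SOME k. k \<in> K i \<and> dist k (z $ i) < r)"
    have k: "k $ i \<in> K i" "dist (k $ i) (z $ i) < r" for i
      using someI_ex[OF ex[rule_format, of i]] unfolding k_def by auto
    have kKp: "k \<in> Kp" unfolding Kp_def prod_set_def using k(1) by simp
    have "dist k z \<le> (\<Sum>i\<in>UNIV. norm ((k - z) $ i))"
      unfolding dist_norm norm_vec_def by (rule L2_set_le_sum) auto
    also have "\<dots> < (\<Sum>i\<in>(UNIV::'n set). r)"
      by (rule sum_strict_mono) (use k(2) in \<open>auto simp: dist_norm\<close>)
    also have "\<dots> = \<delta>" unfolding r_def by simp
    finally have "z \<in> ball k \<delta>" by simp
    then have "z \<in> (\<Union>x\<in>Kp. ball x \<delta>)" using kKp by blast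
    then have "z \<in> Oq" using \<delta>(2) by blast
    then show ?thesis unfolding Oq_def by simp
  qed
  have main: "\<forall>q. q \<in> mpoly_fun \<longrightarrow> dep J q \<longrightarrow> (\<forall>z\<in>U. q z \<noteq> 0) \<longrightarrow> (\<lambda>z. 1 / q z) \<in> CT K"
    if "finite J" for J
    using that
  proof (induction J rule: finite_induct)
    case empty
    show ?case
    proof (intro allI impI)
      fix q' :: "complex^'n \<Rightarrow> complex" assume "dep {} q'"
      then have "(\<lambda>z. 1 / q' z) = (\<lambda>z. 1 / q' 0)" unfolding dep_def by auto
      then show "(\<lambda>z. 1 / q' z) \<in> CT K" using CT_tg[where K=K, OF cK tg_const[where K=K, OF cK]] by simp
    qed
  next
    case (insert d J)
    show ?case
    proof (intro allI impI)
      fix q' :: "complex^'n \<Rightarrow> complex"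
      assume q': "q' \<in> mpoly_fun" and dq: "dep (insert d J) q'" and nq: "\<forall>z\<in>U. q' z \<noteq> 0"
      have updU: "upd z d \<zeta> \<in> U" if "z \<in> U" "\<zeta> \<in> V d" for z \<zeta>
        using that unfolding U_def by (auto simp: upd_nth)
      have IH: "(\<lambda>z. 1 / q' (upd z d \<zeta>)) \<in> CT K" if \<zeta>: "\<zeta> \<in> V d" for \<zeta>
      proof -
        have "dep J (\<lambda>z. q' (upd z d \<zeta>))" unfolding dep_def
        proof (intro allI impI)
          fix z w :: "complex^'n" assume "\<forall>j\<in>J. z $ j = w $ j"
          then have "\<forall>j\<in>insert d J. upd z d \<zeta> $ j = upd w d \<zeta> $ j" by (auto simp: upd_nth)
          then show "q' (upd z d \<zeta>) = q' (upd w d \<zeta>)" using dq unfolding dep_def by blast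
        qed
        moreover have "(\<lambda>z. q' (upd z d \<zeta>)) \<in> mpoly_fun" using q' by (rule mpoly_upd)
        moreover have "\<forall>z\<in>U. q' (upd z d \<zeta>) \<noteq> 0" using nq updU \<zeta> by blast
        ultimately show ?thesis using insert.IH by blast
      qed
      define G where "G = (\<lambda>z w. 1 / q' (upd z d w))"
      have Gc: "continuous_on (Kp \<times> V d) (\<lambda>x. G (fst x) (snd x))"
      proof -
        have "continuous_on (Kp \<times> V d) (\<lambda>x. q' (upd (fst x) d (snd x)))"
          by (rule continuous_on_compose2[OF mpoly_cont[OF q', of UNIV] cont_upd]) auto
        moreover have "q' (upd (fst x) d (snd x)) \<noteq> 0" if "x \<in> Kp \<times> V d" for x
          using nq updU[of "fst x" "snd x"] KpU that by auto
        ultimately show ?thesis unfolding G_def by (intro continuous_intros) auto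
      qed
      have Gh: "G z holomorphic_on V d" if "z \<in> Kp" for z
      proof -
        have "q' (upd z d w) \<noteq> 0" if "w \<in> V d" for w using nq updU[of z w] KpU \<open>z \<in> Kp\<close> that by auto
        then show ?thesis unfolding G_def by (intro holomorphic_intros mpoly_holo[OF q']) auto
      qed
      have qc: "continuous_on Kp (\<lambda>z. 1 / q' z)"
        using mpoly_cont[OF q'] nq KpU by (intro continuous_intros) auto
      show "(\<lambda>z. 1 / q' z) \<in> CT K"
      proof (rule CT_approx[OF cK])
        show "continuous_on (prod_set K) (\<lambda>z. 1 / q' z)" using qc unfolding Kp_def .
        fix e :: real assume e: "e > 0"
        obtain T :: "((complex \<times> complex) \<times> nat) set" and cs \<zeta>s where T: "finite T" "\<forall>t\<in>T. \<zeta>s t \<in> V d \<and> \<zeta>s t \<notin> K d"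
          "\<forall>p\<in>Kp. \<forall>w\<in>K d. norm (G p w - (\<Sum>t\<in>T. cs t * G p (\<zeta>s t) / (\<zeta>s t - w))) \<le> e/2"
          using core1[OF cK[of d] Vo[of d] KV[of d] Kpc Gc Gh half_gt_zero[OF e]] by blast
        define g where "g = (\<lambda>z. \<Sum>t\<in>T. (\<lambda>z. cs t) z * ((\<lambda>z. 1 / q' (upd z d (\<zeta>s t))) z * (\<lambda>z. 1 / (\<zeta>s t - z $ d)) z))"
        have "g \<in> CT K" unfolding g_def
        proof (rule CT_sum[OF cK T(1)])
          fix t assume t: "t \<in> T"
          show "(\<lambda>z. cs t * (1 / q' (upd z d (\<zeta>s t)) * (1 / (\<zeta>s t - z $ d)))) \<in> CT K"
            using t T(2) by (intro CT_mult[OF cK] CT_tg[OF cK] tg_const[OF cK] tg_inv[OF cK] IH) auto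
        qed
        moreover have "\<forall>z\<in>prod_set K. norm (1 / q' z - g z) < e"
        proof
          fix z assume z: "z \<in> prod_set K"
          have "norm (G z (z $ d) - (\<Sum>t\<in>T. cs t * G z (\<zeta>s t) / (\<zeta>s t - z $ d))) \<le> e/2"
            using T(3) z prod_set_nth[OF z] unfolding Kp_def by blast
          moreover have "G z (z $ d) = 1 / q' z" unfolding G_def by (simp add: upd_same)
          moreover have "(\<Sum>t\<in>T. cs t * G z (\<zeta>s t) / (\<zeta>s t - z $ d)) = g z"
            unfolding g_def G_def by (intro sum.cong refl) simp
          ultimately show "norm (1 / q' z - g z) < e" using e by simp
        qed
        ultimately show "\<exists>g\<in>CT K. \<forall>z\<in>prod_set K. norm (1 / q' z - g z) < e" by blast
      qed
    qed
  qed
  have "dep UNIV q" unfolding dep_def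
  proof (intro allI impI)
    fix z w :: "complex^'n" assume "\<forall>j\<in>UNIV. z $ j = w $ j"
    then have "z = w" by (simp add: vec_eq_iff)
    then show "q z = q w" by simp
  qed
  moreover have "\<forall>z\<in>U. q z \<noteq> 0" using Unz by blast
  ultimately show ?thesis using main[of UNIV] q by simp
qed

end

theorem mainTheorem2:
  fixes K :: "'n::finite \<Rightarrow> complex set"
  assumes "\<And>i. compact (K i)"
  shows "R_multi (prod_set K) = sup_closure_on (prod_set K) (tensor_gen K)"
proof
  show "sup_closure_on (prod_set K) (tensor_gen K) \<subseteq> R_multi (prod_set K)"
    by (rule supset[where K=K, OF assms])
  have rat: "rat_on (prod_set K) \<subseteq> sup_closure_on (prod_set K) (tensor_gen K)"
  proof
    fix f assume "f \<in> rat_on (prod_set K)"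
    then obtain p q where pq: "p \<in> mpoly_fun" "q \<in> mpoly_fun" "\<forall>z\<in>prod_set K. q z \<noteq> 0" "f = (\<lambda>z. p z / q z)"
      unfolding rat_on_def by blast
    have "(\<lambda>z. p z * (1 / q z)) \<in> sup_closure_on (prod_set K) (tensor_gen K)"
      by (rule CT_mult[where K=K, OF assms CT_tg[where K=K, OF assms mpoly_tg[where K=K, OF assms pq(1)]]
            inv_CT[where K=K, OF assms pq(2) pq(3)]])
    then show "f \<in> sup_closure_on (prod_set K) (tensor_gen K)" using pq(4) by simp
  qed
  have "R_multi (prod_set K) \<subseteq> sup_closure_on (prod_set K) (sup_closure_on (prod_set K) (tensor_gen K))"
    unfolding R_multi_def by (rule cl_mono[OF rat])
  also have "\<dots> \<subseteq> sup_closure_on (prod_set K) (tensor_gen K)" by (rule cl_idem)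
  finally show "R_multi (prod_set K) \<subseteq> sup_closure_on (prod_set K) (tensor_gen K)" .
qed

end
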